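(* Let $M(A)$ be a $2n$-dimensional real Bott manifold with Kähler structure (RBK manifold), with Bott matrix $A=[a_{ij}]$ and $P$-matrix $P_A$, and fix a partition $\{1,\dots,2n\}=\coprod_{k=1}^n\{j_k,j_{k+n}\}$ with $A^{j_k}=A^{j_{k+n}}$ for all $k$. For $1\le i<j\le 2n$ put $b_{ji}=a_{ij}$, and put $b_{ji}=0$ if $i\ge j$. Then $$w_2(M(A))=\pi^*\Big(\sum_{i=1}^{2n}\big(b_{j_1i}+b_{j_2i}+\dots+b_{j_ni}\big)x_i^2\Big),$$ i.e. the second Stiefel–Whitney class is represented by the polynomial $\sum_{i}\big(b_{j_1i}+\dots+b_{j_ni}\big)x_i^2\in\mathbb F_2[x_1,\dots,x_{2n}]$. Moreover, $M(A)$ admits a Spin-structure if and only if for every $i$ either $b_{j_1i}+b_{j_2i}+\dots+b_{j_ni}\equiv 0 \pmod 2$ or $x_i^2\in \mathrm{Id}_{P_A}$.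
   Context: Real Bott manifolds: let $A=[a_{ij}]$ be an $m\times m$ strictly upper triangular matrix with entries in $\{0,1\}$. For $i=1,\dots,m-1$ let $s_i$ be the Euclidean motion of $\mathbb R^m$ given by $s_i=(\mathrm{diag}[1,\dots,1,(-1)^{a_{i,i+1}},\dots,(-1)^{a_{i,m}}],\ \tfrac12 e_i)$ (the entry $(-1)^{a_{i,i+1}}$ in position $(i+1,i+1)$, translation part having $\tfrac12$ in the $i$-th coordinate and $0$ elsewhere), and $s_m=(I,\tfrac12 e_m)$. The group $\Gamma(A)=\langle s_1,\dots,s_m\rangle$ is a torsion-free crystallographic group whose translation subgroup $\mathbb Z^m$ is generated by $s_1^2,\dots,s_m^2$; $M(A)=\mathbb R^m/\Gamma(A)$ is the real Bott manifold, and there is an extension $0\to\mathbb Z^m\to\Gamma(A)\xrightarrow{\pi}\mathbb Z_2^m\to 1$. Identify $H^*(\mathbb Z_2^m;\mathbb F_2)=\mathbb F_2[x_1,\dots,x_m]$, with $x_1,\dots,x_m$ the basis of $H^1$ dual to the images of $s_1,\dots,s_m$, and let $\pi^*:H^*(\mathbb Z_2^m;\mathbb F_2)\to H^*(\Gamma(A);\mathbb F_2)=H^*(M(A);\mathbb F_2)$. $P$-matrix: $P_A=[p_{ij}]$ is the $m\times m$ matrix with $p_{ii}=1$, $p_{ij}=2$ if $i<j$ and $a_{ij}=1$, and $p_{ij}=0$ otherwise. Define $\alpha,\beta:\{0,1,2,3\}\to\mathbb F_2$ by $\alpha(0)=0,\alpha(1)=1,\alpha(2)=1,\alpha(3)=0$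 and $\beta(0)=0,\beta(1)=1,\beta(2)=0,\beta(3)=1$. For $j=1,\dots,m$ set $\alpha_j=\sum_{i}\alpha(p_{ij})x_i$, $\beta_j=\sum_i\beta(p_{ij})x_i$, $\theta_j=\alpha_j\beta_j$; the characteristic ideal is $\mathrm{Id}_{P_A}=\langle\theta_1,\dots,\theta_m\rangle\subseteq\mathbb F_2[x_1,\dots,x_m]$. (Thus $\alpha_j+\beta_j=\sum_{i<j}a_{ij}x_i$.) The total Stiefel–Whitney class of $M(A)$ is $w(M(A))=\pi^*\big(\prod_{j=1}^m(1+\alpha_j+\beta_j)\big)$, and $\ker\pi^*$ in degree $2$ is $\mathrm{Id}_{P_A}$ in degree 2. RBK manifold: $m=2n$ and there exist $n$ disjoint subsets $\{j_1,j_{n+1}\},\dots,\{j_n,j_{2n}\}$ with $\coprod_{k=1}^n\{j_k,j_{k+n}\}=\{1,\dots,2n\}$ and $A^{j_k}=A^{j_{k+n}}$ for all $k$, where $A^j$ denotes the $j$-th column of $A$ (equivalently, by Ishida's theorem, $M(A)$ admits a Kähler structure). $M(A)$ has a Spin-structure iff $w_2(M(A))=0$. *)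

theory Defs
  imports Main "HOL-Library.Poly_Mapping" "HOL-Library.Z2"
begin

text \<open>Polynomials in F_2[x_1,x_2,...]: finitely supported maps from monomials
  (exponent vectors nat =>0 nat) to coefficients in the two-element field bit.\<close>
type_synonym f2poly = "(nat \<Rightarrow>\<^sub>0 nat) \<Rightarrow>\<^sub>0 bit"

definition Xv :: "nat \<Rightarrow> f2poly" where
  "Xv i = Poly_Mapping.single (Poly_Mapping.single i 1) 1"

definition mon_deg :: "(nat \<Rightarrow>\<^sub>0 nat) \<Rightarrow> nat" where
  "mon_deg mon = (\<Sum>i\<in>Poly_Mapping.keys mon. Poly_Mapping.lookup mon i)"

definition hom_part :: "nat \<Rightarrow> f2poly \<Rightarrow> f2poly" where
  "hom_part d p = Abs_poly_mapping (\<lambda>mon. if mon_deg mon = d then Poly_Mapping.lookup p mon else 0)"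

definition bott_matrix :: "nat \<Rightarrow> (nat \<Rightarrow> nat \<Rightarrow> nat) \<Rightarrow> bool" where
  "bott_matrix m A \<longleftrightarrow> (\<forall>i\<in>{1..m}. \<forall>j\<in>{1..m}. A i j \<in> {0,1} \<and> (j \<le> i \<longrightarrow> A i j = 0))"

definition P_mat :: "(nat \<Rightarrow> nat \<Rightarrow> nat) \<Rightarrow> nat \<Rightarrow> nat \<Rightarrow> nat" where
  "P_mat A i j = (if i = j then 1 else if i < j \<and> A i j = 1 then 2 else 0)"

fun alpha_f :: "nat \<Rightarrow> bit" where
  "alpha_f 0 = 0" | "alpha_f (Suc 0) = 1" | "alpha_f (Suc (Suc 0)) = 1" | "alpha_f _ = 0"

fun beta_f :: "nat \<Rightarrow> bit" where
  "beta_f 0 = 0" | "beta_f (Suc 0) = 1" | "beta_f (Suc (Suc 0)) = 0" | "beta_f _ = 1"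

definition alpha_j :: "nat \<Rightarrow> (nat \<Rightarrow> nat \<Rightarrow> nat) \<Rightarrow> nat \<Rightarrow> f2poly" where
  "alpha_j m A j = (\<Sum>i=1..m. Poly_Mapping.single 0 (alpha_f (P_mat A i j)) * Xv i)"

definition beta_j :: "nat \<Rightarrow> (nat \<Rightarrow> nat \<Rightarrow> nat) \<Rightarrow> nat \<Rightarrow> f2poly" where
  "beta_j m A j = (\<Sum>i=1..m. Poly_Mapping.single 0 (beta_f (P_mat A i j)) * Xv i)"

definition theta_j :: "nat \<Rightarrow> (nat \<Rightarrow> nat \<Rightarrow> nat) \<Rightarrow> nat \<Rightarrow> f2poly" where
  "theta_j m A j = alpha_j m A j * beta_j m A j"

text \<open>Characteristic ideal Id_{P_A} = <theta_1,...,theta_m> in F_2[x_1..x_m].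
  Cofactors are polynomials in the variables x_1..x_m only.\<close>
definition poly_in_vars :: "nat \<Rightarrow> f2poly \<Rightarrow> bool" where
  "poly_in_vars m p \<longleftrightarrow> (\<forall>mon\<in>Poly_Mapping.keys p. Poly_Mapping.keys mon \<subseteq> {1..m})"

definition char_ideal :: "nat \<Rightarrow> (nat \<Rightarrow> nat \<Rightarrow> nat) \<Rightarrow> f2poly set" where
  "char_ideal m A = {\<Sum>j=1..m. g j * theta_j m A j | g. \<forall>j. poly_in_vars m (g j)}"

text \<open>Polynomial whose image under pi^* is the total Stiefel-Whitney class.\<close>
definition sw_poly :: "nat \<Rightarrow> (nat \<Rightarrow> nat \<Rightarrow> nat) \<Rightarrow> f2poly" where
  "sw_poly m A = (\<Prod>j=1..m. 1 + alpha_j m A j + beta_j m A j)"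

definition w2_poly :: "nat \<Rightarrow> (nat \<Rightarrow> nat \<Rightarrow> nat) \<Rightarrow> f2poly" where
  "w2_poly m A = hom_part 2 (sw_poly m A)"

definition bmat :: "(nat \<Rightarrow> nat \<Rightarrow> nat) \<Rightarrow> nat \<Rightarrow> nat \<Rightarrow> nat" where
  "bmat A j i = (if i < j then A i j else 0)"

text \<open>Degree-2 classes P, Q of F_2[x_1..x_m] satisfy pi^*(P) = pi^*(Q) iff P - Q lies in
  the kernel of pi^* in degree 2, which is the degree-2 part of Id_{P_A}.\<close>
definition same_image :: "nat \<Rightarrow> (nat \<Rightarrow> nat \<Rightarrow> nat) \<Rightarrow> f2poly \<Rightarrow> f2poly \<Rightarrow> bool" where
  "same_image m A p q \<longleftrightarrow> p - q \<in> char_ideal m A"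

text \<open>Spin structure iff w_2 = 0 iff pi^*(w2_poly) = 0.\<close>
definition has_spin :: "nat \<Rightarrow> (nat \<Rightarrow> nat \<Rightarrow> nat) \<Rightarrow> bool" where
  "has_spin m A \<longleftrightarrow> same_image m A (w2_poly m A) 0"

end

theory Submission
  imports Defs
begin

lemma two0: "(x::f2poly) + x = 0"
proof -
  have "(2::f2poly) = 0" by (metis single_numeral bit_2_eq_0 single_zero)
  then show ?thesis by (metis mult_2 mult_zero_left)
qed

lemma sq_add: "((a::f2poly) + b)^2 = a^2 + b^2"
proof -
  have "2 * a * b = a * b + a * b" by (simp only: mult_2 distrib_right)
  then show ?thesis unfolding power2_sum by (simp only: two0 add_0_right)
qed

lemma sq_sum: "finite S \<Longrightarrow> ((\<Sum>i\<in>S. f i)::f2poly)^2 = (\<Sum>i\<in>S. (f i)^2)"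
  by (induction S rule: finite_induct) (simp_all add: sq_add)

lemma lookup_single0_mult: "Poly_Mapping.lookup (Poly_Mapping.single 0 c * p) k = c * Poly_Mapping.lookup p k"
  by (simp add: mult_map_scale_conv_mult[symmetric] map.rep_eq when_def)

lemma mon_deg_sup: "finite S \<Longrightarrow> Poly_Mapping.keys a \<subseteq> S \<Longrightarrow> mon_deg a = (\<Sum>i\<in>S. Poly_Mapping.lookup a i)"
  unfolding mon_deg_def
  apply (rule sum.mono_neutral_left)
  apply assumption+
  apply (intro ballI, erule DiffE)
  apply (simp add: in_keys_iff)
  done

lemma mon_deg_add: "mon_deg (a + b) = mon_deg a + mon_deg b"
proof -
  let ?S = "Poly_Mapping.keys a \<union> Poly_Mapping.keys b"
  have "mon_deg (a+b) = (\<Sum>i\<in>?S. Poly_Mapping.lookup (a+b) i)" using keys_add[of a b] by (intro mon_deg_sup) auto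
  also have "\<dots> = (\<Sum>i\<in>?S. Poly_Mapping.lookup a i) + (\<Sum>i\<in>?S. Poly_Mapping.lookup b i)" by (simp add: lookup_add sum.distrib)
  also have "\<dots> = mon_deg a + mon_deg b"
  proof -
    have "mon_deg a = (\<Sum>i\<in>?S. Poly_Mapping.lookup a i)" by (rule mon_deg_sup) auto
    moreover have "mon_deg b = (\<Sum>i\<in>?S. Poly_Mapping.lookup b i)" by (rule mon_deg_sup) auto
    ultimately show ?thesis by simp
  qed
  finally show ?thesis .
qed

lemma mon_deg_single: "mon_deg (Poly_Mapping.single i k) = k"
  unfolding mon_deg_def by simp

lemma mon_deg_0_iff: "mon_deg a = 0 \<longleftrightarrow> a = 0"
  unfolding mon_deg_def by (auto simp: in_keys_iff) (metis keys_eq_empty ex_in_conv in_keys_iff)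

lemma ofnat_bit: "(of_nat n :: bit) = (if even n then 0 else 1)"
  by (induction n) auto

definition hg :: "nat \<Rightarrow> f2poly \<Rightarrow> bool" where
  "hg d p \<longleftrightarrow> (\<forall>m\<in>Poly_Mapping.keys p. mon_deg m = d)"
definition hi :: "nat \<Rightarrow> f2poly \<Rightarrow> bool" where
  "hi d p \<longleftrightarrow> (\<forall>m\<in>Poly_Mapping.keys p. d \<le> mon_deg m)"

lemma hg_add: "hg d p \<Longrightarrow> hg d q \<Longrightarrow> hg d (p+q)"
  unfolding hg_def using keys_add[of p q] by blast
lemma hi_add: "hi d p \<Longrightarrow> hi d q \<Longrightarrow> hi d (p+q)"
  unfolding hi_def using keys_add[of p q] by blast
lemma hg_zero: "hg d 0" unfolding hg_def by simp
lemma hi_zero: "hi d 0" unfolding hi_def by simp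
lemma hg_sum: "(\<And>i. i\<in>S \<Longrightarrow> hg d (f i)) \<Longrightarrow> hg d (sum f S)"
proof (cases "finite S")
  case True
  show "(\<And>i. i\<in>S \<Longrightarrow> hg d (f i)) \<Longrightarrow> hg d (sum f S)"
    using True by (induction S rule: finite_induct) (auto intro: hg_add hg_zero)
qed (simp add: hg_zero)
lemma hg_mult: "hg a p \<Longrightarrow> hg b q \<Longrightarrow> hg (a+b) (p*q)"
  unfolding hg_def using keys_mult[of p q] by (auto simp: mon_deg_add)
lemma hi_mult: "hi a p \<Longrightarrow> hi b q \<Longrightarrow> hi (a+b) (p*q)"
proof -
  assume "hi a p" "hi b q"
  then show ?thesis unfolding hi_def using keys_mult[of p q]
    by (force simp: mon_deg_add intro: add_mono)
qed
lemma hi_mono: "d \<le> e \<Longrightarrow> hi e p \<Longrightarrow> hi d p"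
  unfolding hi_def using order_trans by blast
lemma hg_hi: "hg d p \<Longrightarrow> hi d p"
  unfolding hg_def hi_def by simp
lemma hg_single0: "hg 0 (Poly_Mapping.single 0 c)"
  unfolding hg_def by (simp add: mon_deg_0_iff)
lemma hg_one: "hg 0 1"
  using hg_single0[of 1] by simp
lemma hg_Xv: "hg 1 (Xv i)"
  unfolding hg_def Xv_def by (simp add: mon_deg_single)
lemma lookup_hi: "hi d p \<Longrightarrow> mon_deg m < d \<Longrightarrow> Poly_Mapping.lookup p m = 0"
  unfolding hi_def by (meson in_keys_iff not_le)
lemma lookup_hg: "hg d p \<Longrightarrow> mon_deg m \<noteq> d \<Longrightarrow> Poly_Mapping.lookup p m = 0"
  unfolding hg_def by (meson in_keys_iff)

lemma lookup_hom_part: "Poly_Mapping.lookup (hom_part d p) m = (if mon_deg m = d then Poly_Mapping.lookup p m else 0)"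
proof -
  have "finite {mon. (if mon_deg mon = d then Poly_Mapping.lookup p mon else 0) \<noteq> 0}"
    by (rule finite_subset[of _ "Poly_Mapping.keys p"]) (auto simp: in_keys_iff)
  then show ?thesis unfolding hom_part_def by simp
qed

lemma expand: "finite S \<Longrightarrow> (\<forall>k\<in>S. hg 1 (f k)) \<Longrightarrow>
   \<exists>R. hi 2 R \<and> (\<Prod>k\<in>S. 1 + f k) = 1 + (\<Sum>k\<in>S. f k) + R"
proof (induction S rule: finite_induct)
  case empty
  then show ?case by (intro exI[of _ 0]) (simp add: hi_zero)
next
  case (insert x F)
  then obtain R where R: "hi 2 R" "(\<Prod>k\<in>F. 1 + f k) = 1 + (\<Sum>k\<in>F. f k) + R" by auto
  have fx: "hg 1 (f x)" using insert by auto
  have sF: "hg 1 (\<Sum>k\<in>F. f k)" using insert by (auto intro: hg_sum)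
  let ?R = "R + f x * (\<Sum>k\<in>F. f k) + f x * R"
  have "hi 2 ?R"
  proof (intro hi_add)
    show "hi 2 (f x * sum f F)" using hg_hi[OF hg_mult[OF fx sF]] by (simp only: one_add_one)
    show "hi 2 (f x * R)" using hi_mult[OF hg_hi[OF fx] R(1)] by (rule hi_mono[rotated]) simp
  qed (rule R(1))
  moreover have "(\<Prod>k\<in>insert x F. 1 + f k) = 1 + (\<Sum>k\<in>insert x F. f k) + ?R"
    using insert R(2) by (simp add: algebra_simps)
  ultimately show ?case by blast
qed

lemma split_low: "\<exists>h. g = Poly_Mapping.single 0 (Poly_Mapping.lookup g 0) + h \<and> hi 1 h"
proof (intro exI conjI)
  let ?h = "g - Poly_Mapping.single 0 (Poly_Mapping.lookup g 0)"
  show "g = Poly_Mapping.single 0 (Poly_Mapping.lookup g 0) + ?h" by simp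
  show "hi 1 ?h" unfolding hi_def
  proof
    fix m assume "m \<in> Poly_Mapping.keys ?h"
    then have "m \<noteq> 0" by (auto simp: in_keys_iff lookup_minus)
    then show "1 \<le> mon_deg m" using mon_deg_0_iff[of m] by linarith
  qed
qed

lemma single_sum: "Poly_Mapping.single k (\<Sum>i\<in>S. f i) = (\<Sum>i\<in>S. Poly_Mapping.single k (f i))"
proof (cases "finite S")
  case True then show ?thesis by (induction S rule: finite_induct) (simp_all add: single_add)
qed simp

lemma bit_sq: "(c::bit)^2 = c" by (cases c) simp_all

lemma single0_sq: "(Poly_Mapping.single 0 (c::bit))^2 = Poly_Mapping.single 0 c"
  by (simp add: power2_eq_square mult_single bit_sq[unfolded power2_eq_square])

lemma ofnat_sq: "(of_nat x :: f2poly)^2 = of_nat x"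
  by (metis single_of_nat single0_sq)

lemma Xv_mult: "Xv l * Xv j = Poly_Mapping.single (Poly_Mapping.single l 1 + Poly_Mapping.single j 1) 1"
  unfolding Xv_def by (simp add: mult_single)

lemma Xv_sq: "Xv i ^ 2 = Poly_Mapping.single (Poly_Mapping.single i 2) 1"
  unfolding power2_eq_square Xv_mult by (simp add: single_add[symmetric] numeral_2_eq_2)

lemma sum_delta_X: "i \<in> {1..m} \<Longrightarrow> (\<forall>l\<in>{1..m}. f l = (if l = i then 1 else 0)) \<Longrightarrow>
   (\<Sum>l=1..m. Poly_Mapping.single 0 (f l) * Xv l) = Xv i"
proof -
  assume i: "i \<in> {1..m}" and f: "\<forall>l\<in>{1..m}. f l = (if l = i then 1 else 0)"
  have "(\<Sum>l=1..m. Poly_Mapping.single 0 (f l) * Xv l) = (\<Sum>l=1..m. if l = i then Xv l else 0)"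
    by (rule sum.cong) (auto simp: f)
  also have "\<dots> = Xv i" using i by simp
  finally show ?thesis .
qed

lemma alpha_f_2 [simp]: "alpha_f 2 = 1" by (simp add: numeral_2_eq_2)
lemma beta_f_2 [simp]: "beta_f 2 = 0" by (simp add: numeral_2_eq_2)

lemma P_mat_vals: "P_mat A l j \<in> {0,1,2}" unfolding P_mat_def by auto

lemma beta_eq: "j \<in> {1..m} \<Longrightarrow> beta_j m A j = Xv j"
  unfolding beta_j_def
  by (rule sum_delta_X) (auto simp: P_mat_def)

lemma theta_form: "j \<in> {1..m} \<Longrightarrow>
   theta_j m A j = (\<Sum>l=1..m. Poly_Mapping.single 0 (alpha_f (P_mat A l j)) * (Xv l * Xv j))"
  unfolding theta_j_def beta_eq alpha_j_def by (simp add: sum_distrib_right mult.assoc)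

lemma hg_theta: "j \<in> {1..m} \<Longrightarrow> hg 2 (theta_j m A j)"
  unfolding theta_form
  by (intro hg_sum) (metis hg_mult hg_single0 hg_Xv add_0_left one_add_one)

definition LL :: "nat \<Rightarrow> (nat \<Rightarrow> nat \<Rightarrow> nat) \<Rightarrow> nat \<Rightarrow> f2poly" where
  "LL m A j = (\<Sum>i=1..m. Poly_Mapping.single 0 (of_nat (bmat A j i)) * Xv i)"

lemma hg_LL: "hg 1 (LL m A j)"
  unfolding LL_def by (intro hg_sum) (metis hg_mult hg_single0 hg_Xv add_0_left)

lemma ab_sum: "bott_matrix m A \<Longrightarrow> j \<in> {1..m} \<Longrightarrow> alpha_j m A j + beta_j m A j = LL m A j"
proof -
  assume b: "bott_matrix m A" and j: "j \<in> {1..m}"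
  have "alpha_j m A j + beta_j m A j =
     (\<Sum>i=1..m. Poly_Mapping.single 0 (alpha_f (P_mat A i j)) * Xv i + Poly_Mapping.single 0 (beta_f (P_mat A i j)) * Xv i)"
    unfolding alpha_j_def beta_j_def by (simp add: sum.distrib)
  also have "\<dots> = LL m A j" unfolding LL_def
  proof (rule sum.cong)
    fix i assume i: "i \<in> {1..m}"
    have A01: "A i j \<in> {0,1}" and tri: "j \<le> i \<Longrightarrow> A i j = 0" using b i j unfolding bott_matrix_def by auto
    have "alpha_f (P_mat A i j) + beta_f (P_mat A i j) = of_nat (bmat A j i)"
      using A01 tri unfolding P_mat_def bmat_def by (cases "i = j"; cases "i < j"; auto)
    then show "Poly_Mapping.single 0 (alpha_f (P_mat A i j)) * Xv i + Poly_Mapping.single 0 (beta_f (P_mat A i j)) * Xv i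
       = Poly_Mapping.single 0 (of_nat (bmat A j i)) * Xv i"
      by (simp add: distrib_right[symmetric] single_add[symmetric])
  qed simp
  finally show ?thesis .
qed

lemma bmat_eq: "bott_matrix m A \<Longrightarrow> i \<in> {1..m} \<Longrightarrow> j \<in> {1..m} \<Longrightarrow> bmat A j i = A i j"
  unfolding bott_matrix_def bmat_def by (cases "i < j") auto

lemma hom_part_eq: "hg 2 E \<Longrightarrow> hi 4 R \<Longrightarrow> hom_part 2 (1 + E + R) = E"
proof (rule poly_mapping_eqI)
  fix mon assume E: "hg 2 E" and R: "hi 4 R"
  show "Poly_Mapping.lookup (hom_part 2 (1 + E + R)) mon = Poly_Mapping.lookup E mon"
  proof (cases "mon_deg mon = 2")
    case True
    have "Poly_Mapping.lookup (1::f2poly) mon = 0" using lookup_hg[OF hg_one] True by simp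
    moreover have "Poly_Mapping.lookup R mon = 0" using lookup_hi[OF R] True by simp
    ultimately show ?thesis using True by (simp add: lookup_hom_part lookup_add)
  next
    case False
    then show ?thesis using lookup_hg[OF E False] by (simp add: lookup_hom_part)
  qed
qed

lemma w2_eq:
  fixes n :: nat and A :: "nat \<Rightarrow> nat \<Rightarrow> nat" and jj :: "nat \<Rightarrow> nat"
  assumes bott: "bott_matrix (2*n) A"
    and part: "bij_betw jj {1..2*n} {1..2*n}"
    and cols: "\<forall>k\<in>{1..n}. \<forall>i\<in>{1..2*n}. A i (jj k) = A i (jj (k+n))"
  shows "w2_poly (2*n) A =
     (\<Sum>i=1..2*n. Poly_Mapping.single 0 (of_nat (\<Sum>k=1..n. bmat A (jj k) i)) * Xv i ^ 2)"
proof -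
  define m where "m = 2*n"
  have jjr: "k \<in> {1..m} \<Longrightarrow> jj k \<in> {1..m}" for k unfolding m_def by (rule bij_betw_apply[OF part])
  let ?f = "\<lambda>j. 1 + LL m A j"
  have "sw_poly m A = (\<Prod>j\<in>{1..m}. ?f j)"
    unfolding sw_poly_def by (rule prod.cong) (auto simp: add.assoc ab_sum bott[folded m_def])
  also have "\<dots> = (\<Prod>k\<in>{1..m}. ?f (jj k))"
    using prod.reindex_bij_betw[OF part[folded m_def], of ?f] by simp
  also have "\<dots> = (\<Prod>k\<in>{1..n}. ?f (jj k)) * (\<Prod>k\<in>{n+1..n+n}. ?f (jj k))"
  proof -
    have "{1..m} = {1..n} \<union> {n+1..n+n}" unfolding m_def by auto
    then show ?thesis by (simp add: prod.union_disjoint)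
  qed
  also have "(\<Prod>k\<in>{n+1..n+n}. ?f (jj k)) = (\<Prod>k\<in>{1..n}. ?f (jj (k+n)))"
    using prod.shift_bounds_cl_nat_ivl[of "\<lambda>k. ?f (jj k)" 1 n n] by simp
  also have "\<dots> = (\<Prod>k\<in>{1..n}. ?f (jj k))"
  proof (rule prod.cong)
    fix k assume k: "k \<in> {1..n}"
    have k1: "k \<in> {1..m}" and k2: "k + n \<in> {1..m}" using k m_def by auto
    have "LL m A (jj (k+n)) = LL m A (jj k)" unfolding LL_def
    proof (rule sum.cong)
      fix i assume i: "i \<in> {1..m}"
      have "bmat A (jj (k+n)) i = bmat A (jj k) i"
        using bmat_eq[OF bott[folded m_def] i jjr[OF k1]] bmat_eq[OF bott[folded m_def] i jjr[OF k2]]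
          cols k i m_def by auto
      then show "Poly_Mapping.single 0 (of_nat (bmat A (jj (k+n)) i)) * Xv i =
         Poly_Mapping.single 0 (of_nat (bmat A (jj k) i)) * Xv i" by simp
    qed simp
    then show "?f (jj (k+n)) = ?f (jj k)" by simp
  qed simp
  finally have sw: "sw_poly m A = (\<Prod>k\<in>{1..n}. ?f (jj k))^2" by (simp add: power2_eq_square)
  define E where "E = (\<Sum>k\<in>{1..n}. LL m A (jj k))"
  obtain R where R: "hi 2 R" "(\<Prod>k\<in>{1..n}. ?f (jj k)) = 1 + E + R"
    using expand[of "{1..n}" "\<lambda>k. LL m A (jj k)"] hg_LL unfolding E_def by auto
  have hE: "hg 1 E" unfolding E_def by (intro hg_sum hg_LL)
  have sw2: "sw_poly m A = 1 + E^2 + R^2" unfolding sw R(2) sq_add by simp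
  have hE2: "hg 2 (E^2)" using hg_mult[OF hE hE] by (simp add: power2_eq_square numeral_2_eq_2)
  have hR2: "hi 4 (R^2)" using hi_mult[OF R(1) R(1)] by (simp add: power2_eq_square numeral_2_eq_2 numeral_Bit0)
  have w2: "w2_poly m A = E^2" unfolding w2_poly_def sw2 by (rule hom_part_eq[OF hE2 hR2])
  have "E^2 = (\<Sum>k\<in>{1..n}. (LL m A (jj k))^2)" unfolding E_def by (simp add: sq_sum)
  also have "\<dots> = (\<Sum>k\<in>{1..n}. \<Sum>i=1..m. Poly_Mapping.single 0 (of_nat (bmat A (jj k) i)) * Xv i ^ 2)"
    unfolding LL_def by (simp add: sq_sum power_mult_distrib ofnat_sq)
  also have "\<dots> = (\<Sum>i=1..m. \<Sum>k\<in>{1..n}. Poly_Mapping.single 0 (of_nat (bmat A (jj k) i)) * Xv i ^ 2)"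
    by (rule sum.swap)
  also have "\<dots> = (\<Sum>i=1..m. Poly_Mapping.single 0 (of_nat (\<Sum>k=1..n. bmat A (jj k) i)) * Xv i ^ 2)"
    by (simp only: sum_distrib_right[symmetric] single_sum[symmetric] of_nat_sum)
  finally show ?thesis using w2 m_def by simp
qed

abbreviation mo :: "nat \<Rightarrow> nat \<Rightarrow> (nat \<Rightarrow>\<^sub>0 nat)" where
  "mo l j \<equiv> Poly_Mapping.single l 1 + Poly_Mapping.single j 1"

lemma lk_mo: "Poly_Mapping.lookup (mo l j) x = (if l = x then 1 else 0) + (if j = x then 1 else 0)"
  by (simp add: lookup_add lookup_single when_def)
lemma lk_s2: "Poly_Mapping.lookup (Poly_Mapping.single i (2::nat)) x = (if i = x then 2 else 0)"
  by (simp add: lookup_single when_def)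

lemma mo_eq1: "mo l j = Poly_Mapping.single i 2 \<longleftrightarrow> l = i \<and> j = i"
proof
  assume H: "mo l j = Poly_Mapping.single i 2"
  have "Poly_Mapping.lookup (mo l j) l = Poly_Mapping.lookup (Poly_Mapping.single i 2) l" "Poly_Mapping.lookup (mo l j) j = Poly_Mapping.lookup (Poly_Mapping.single i 2) j"
    using H by simp_all
  then show "l = i \<and> j = i" unfolding lk_mo lk_s2 by (auto split: if_splits)
next
  assume "l = i \<and> j = i"
  then show "mo l j = Poly_Mapping.single i 2" by (simp add: single_add[symmetric] numeral_2_eq_2)
qed

lemma mo_eq2: "k \<noteq> i \<Longrightarrow> mo l j = mo k i \<longleftrightarrow> (l = k \<and> j = i \<or> l = i \<and> j = k)"
proof
  assume ki: "k \<noteq> i" and H: "mo l j = mo k i"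
  have "Poly_Mapping.lookup (mo l j) l = Poly_Mapping.lookup (mo k i) l" "Poly_Mapping.lookup (mo l j) j = Poly_Mapping.lookup (mo k i) j"
    using H by simp_all
  then show "l = k \<and> j = i \<or> l = i \<and> j = k" using ki unfolding lk_mo
    by (cases "l = k"; cases "l = i"; cases "j = k"; cases "j = i"; simp)
next
  assume "l = k \<and> j = i \<or> l = i \<and> j = k"
  then show "mo l j = mo k i" by (auto simp: add.commute)
qed

lemma mo_neq: "k \<noteq> i \<Longrightarrow> Poly_Mapping.single i' (2::nat) \<noteq> mo k i"
proof
  assume ki: "k \<noteq> i" and H: "Poly_Mapping.single i' 2 = mo k i"
  have "Poly_Mapping.lookup (Poly_Mapping.single i' 2) k = Poly_Mapping.lookup (mo k i) k" using H by simp
  then show False using ki unfolding lk_mo lk_s2 by (auto split: if_splits)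
qed

lemma deg_mo: "mon_deg (mo l j) = 2" by (simp add: mon_deg_add mon_deg_single)
lemma deg_s2: "mon_deg (Poly_Mapping.single i (2::nat)) = 2" by (simp add: mon_deg_single)

lemma piv_zero: "poly_in_vars m 0" unfolding poly_in_vars_def by simp
lemma piv_one: "poly_in_vars m 1" unfolding poly_in_vars_def by simp
lemma piv_add: "poly_in_vars m p \<Longrightarrow> poly_in_vars m q \<Longrightarrow> poly_in_vars m (p+q)"
  unfolding poly_in_vars_def using keys_add[of p q] by blast

lemma id_zero: "0 \<in> char_ideal m A"
  unfolding char_ideal_def by (rule CollectI, rule exI[of _ "\<lambda>_. 0"]) (simp add: piv_zero)

lemma id_add: "p \<in> char_ideal m A \<Longrightarrow> q \<in> char_ideal m A \<Longrightarrow> p + q \<in> char_ideal m A"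
proof -
  assume "p \<in> char_ideal m A" "q \<in> char_ideal m A"
  then obtain g1 g2 where g1: "p = (\<Sum>j=1..m. g1 j * theta_j m A j)" "\<forall>j. poly_in_vars m (g1 j)"
    and g2: "q = (\<Sum>j=1..m. g2 j * theta_j m A j)" "\<forall>j. poly_in_vars m (g2 j)"
    unfolding char_ideal_def by blast
  have e: "p + q = (\<Sum>j=1..m. (g1 j + g2 j) * theta_j m A j)"
    unfolding g1 g2 by (simp add: sum.distrib distrib_right)
  have v: "\<forall>j. poly_in_vars m (g1 j + g2 j)" using g1(2) g2(2) piv_add by blast
  show ?thesis unfolding char_ideal_def
    apply (rule CollectI)
    apply (rule exI[of _ "\<lambda>j. g1 j + g2 j"])
    using e v by simp
qed

lemma id_sum: "(\<And>i. i \<in> S \<Longrightarrow> f i \<in> char_ideal m A) \<Longrightarrow> sum f S \<in> char_ideal m A"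
proof (cases "finite S")
  case True
  show "(\<And>i. i\<in>S \<Longrightarrow> f i \<in> char_ideal m A) \<Longrightarrow> sum f S \<in> char_ideal m A"
    using True by (induction S rule: finite_induct) (auto intro: id_add id_zero)
qed (simp add: id_zero)

lemma id_theta: "i \<in> {1..m} \<Longrightarrow> theta_j m A i \<in> char_ideal m A"
proof -
  assume i: "i \<in> {1..m}"
  have "(\<Sum>j=1..m. (if j = i then 1 else 0) * theta_j m A j) = (\<Sum>j=1..m. if j = i then theta_j m A j else 0)"
    by (rule sum.cong) auto
  also have "\<dots> = theta_j m A i" using i by simp
  finally have "(\<Sum>j=1..m. (if j = i then 1 else 0) * theta_j m A j) = theta_j m A i" .
  moreover have "\<forall>j. poly_in_vars m (if j = i then 1 else 0)" by (simp add: piv_one piv_zero)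
  ultimately show ?thesis unfolding char_ideal_def
    apply -
    apply (rule CollectI)
    apply (rule exI[of _ "\<lambda>j. if j = i then 1 else 0"])
    by simp
qed

lemma theta_sq: "i \<in> {1..m} \<Longrightarrow> (\<forall>l\<in>{1..m}. l < i \<longrightarrow> A l i = 0) \<Longrightarrow> theta_j m A i = Xv i ^ 2"
  unfolding theta_j_def beta_eq power2_eq_square alpha_j_def
  by (subst sum_delta_X[of i]) (auto simp: P_mat_def)

lemma coef: "mon_deg mon = 2 \<Longrightarrow> Poly_Mapping.lookup (\<Sum>j=1..m. g j * theta_j m A j) mon =
   (\<Sum>j=1..m. Poly_Mapping.lookup (g j) 0 * (\<Sum>l=1..m. alpha_f (P_mat A l j) * (if mo l j = mon then 1 else 0)))"
proof -
  assume d: "mon_deg mon = 2"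
  show ?thesis unfolding lookup_sum
  proof (rule sum.cong)
    fix j assume j: "j \<in> {1..m}"
    obtain h where h: "g j = Poly_Mapping.single 0 (Poly_Mapping.lookup (g j) 0) + h" "hi 1 h" using split_low by blast
    have "hi 3 (h * theta_j m A j)" using hi_mult[OF h(2) hg_hi[OF hg_theta[OF j]]] by (simp add: numeral_3_eq_3)
    then have z: "Poly_Mapping.lookup (h * theta_j m A j) mon = 0" using d by (intro lookup_hi) auto
    have "Poly_Mapping.lookup (g j * theta_j m A j) mon = Poly_Mapping.lookup (g j) 0 * Poly_Mapping.lookup (theta_j m A j) mon"
      by (subst h(1)) (simp add: distrib_right lookup_add z lookup_single0_mult)
    also have "Poly_Mapping.lookup (theta_j m A j) mon = (\<Sum>l=1..m. alpha_f (P_mat A l j) * (if mo l j = mon then 1 else 0))"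
      unfolding theta_form[OF j] lookup_sum Xv_mult
      by (simp add: lookup_single0_mult lookup_single when_def)
    finally show "Poly_Mapping.lookup (g j * theta_j m A j) mon = Poly_Mapping.lookup (g j) 0 * (\<Sum>l=1..m. alpha_f (P_mat A l j) * (if mo l j = mon then 1 else 0))" .
  qed simp
qed

declare mult_bit_eq_and[simp del] add_bit_eq_xor[simp del]

lemma mult_if01 [simp]: "(x::'a::semiring_1) * (if P then 1 else 0) = (if P then x else 0)" by simp

lemma s2_eq: "Poly_Mapping.single i' (2::nat) = Poly_Mapping.single i 2 \<longleftrightarrow> i' = i"
proof
  assume H: "Poly_Mapping.single i' (2::nat) = Poly_Mapping.single i 2"
  have "Poly_Mapping.lookup (Poly_Mapping.single i' (2::nat)) i' = Poly_Mapping.lookup (Poly_Mapping.single i 2) i'" using H by simp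
  then show "i' = i" unfolding lk_s2 by (auto split: if_splits)
qed simp

lemma lookup_W: "Poly_Mapping.lookup (\<Sum>i=1..m. Poly_Mapping.single 0 (c i) * Xv i ^ 2) mon =
   (\<Sum>i=1..m. c i * (if Poly_Mapping.single i 2 = mon then 1 else 0))"
  unfolding lookup_sum Xv_sq by (simp add: lookup_single0_mult lookup_single when_def)

theorem theorem3p1:
  fixes n :: nat and A :: "nat \<Rightarrow> nat \<Rightarrow> nat" and jj :: "nat \<Rightarrow> nat"
  assumes bott: "bott_matrix (2*n) A"
    and part: "bij_betw jj {1..2*n} {1..2*n}"
    and cols: "\<forall>k\<in>{1..n}. \<forall>i\<in>{1..2*n}. A i (jj k) = A i (jj (k+n))"
  shows "same_image (2*n) A (w2_poly (2*n) A)
           (\<Sum>i=1..2*n. Poly_Mapping.single 0 (of_nat (\<Sum>k=1..n. bmat A (jj k) i)) * Xv i ^ 2)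
       \<and> (has_spin (2*n) A \<longleftrightarrow>
           (\<forall>i\<in>{1..2*n}. even (\<Sum>k=1..n. bmat A (jj k) i) \<or> Xv i ^ 2 \<in> char_ideal (2*n) A))"
proof -
  define m where "m = 2*n"
  define b where "b i = (\<Sum>k=1..n. bmat A (jj k) i)" for i
  define c :: "nat \<Rightarrow> bit" where "c i = of_nat (b i)" for i
  define W where "W = (\<Sum>i=1..m. Poly_Mapping.single 0 (c i) * Xv i ^ 2)"
  have bt: "bott_matrix m A" using bott m_def by simp
  have w2: "w2_poly m A = W" unfolding W_def c_def b_def m_def by (rule w2_eq[OF bott part cols])
  have P1: "same_image m A (w2_poly m A) W" unfolding same_image_def w2 by (simp add: id_zero)
  have "has_spin m A \<longleftrightarrow> W \<in> char_ideal m A" unfolding has_spin_def same_image_def w2 by simp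
  also have "\<dots> \<longleftrightarrow> (\<forall>i\<in>{1..m}. even (b i) \<or> Xv i ^ 2 \<in> char_ideal m A)"
  proof
    assume H: "\<forall>i\<in>{1..m}. even (b i) \<or> Xv i ^ 2 \<in> char_ideal m A"
    show "W \<in> char_ideal m A" unfolding W_def
    proof (rule id_sum)
      fix i assume i: "i \<in> {1..m}"
      show "Poly_Mapping.single 0 (c i) * Xv i ^ 2 \<in> char_ideal m A"
      proof (cases "even (b i)")
        case True
        then have "c i = 0" unfolding c_def by (simp add: ofnat_bit)
        then show ?thesis by (simp add: id_zero)
      next
        case False
        then have "c i = 1" unfolding c_def by (simp add: ofnat_bit)
        then show ?thesis using H i False by auto
      qed
    qed
  next
    assume "W \<in> char_ideal m A"
    then obtain g where g: "W = (\<Sum>j=1..m. g j * theta_j m A j)" unfolding char_ideal_def by blast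
    define d where "d j = Poly_Mapping.lookup (g j) 0" for j
    define e where "e l j = alpha_f (P_mat A l j)" for l j
    show "\<forall>i\<in>{1..m}. even (b i) \<or> Xv i ^ 2 \<in> char_ideal m A"
    proof (intro ballI, subst disj_commute, rule disjCI)
      fix i assume i: "i \<in> {1..m}" and odd: "\<not> even (b i)"
      have ci: "c i = 1" unfolding c_def using odd by (simp add: ofnat_bit)
      have col: "\<forall>l\<in>{1..m}. l < i \<longrightarrow> A l i = 0"
      proof (intro ballI impI, rule ccontr)
        fix l assume l: "l \<in> {1..m}" and li: "l < i" and nz: "A l i \<noteq> 0"
        have "A l i \<in> {0,1}" using bt l i unfolding bott_matrix_def by blast
        then have A1: "A l i = 1" using nz by auto
        have "Poly_Mapping.lookup W (Poly_Mapping.single i (2::nat)) = (\<Sum>i'=1..m. c i' * (if Poly_Mapping.single i' (2::nat) = Poly_Mapping.single i (2::nat) then 1 else 0))"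
          unfolding W_def by (rule lookup_W)
        also have "\<dots> = c i" using i by (simp add: s2_eq)
        finally have W1: "Poly_Mapping.lookup W (Poly_Mapping.single i (2::nat)) = 1" using ci by simp
        have "Poly_Mapping.lookup W (mo l i) = (\<Sum>i'=1..m. c i' * (if Poly_Mapping.single i' (2::nat) = mo l i then 1 else 0))"
          unfolding W_def by (rule lookup_W)
        also have "\<dots> = 0" using mo_neq[of l i] li by simp
        finally have W2: "Poly_Mapping.lookup W (mo l i) = 0" .
        have "Poly_Mapping.lookup W (Poly_Mapping.single i (2::nat)) = (\<Sum>j=1..m. d j * (\<Sum>l'=1..m. e l' j * (if mo l' j = Poly_Mapping.single i (2::nat) then 1 else 0)))"
          unfolding g d_def e_def by (rule coef[OF deg_s2])
        also have "\<dots> = (\<Sum>j=1..m. if j = i then d i else 0)"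
        proof (rule sum.cong)
          fix j assume j: "j \<in> {1..m}"
          show "d j * (\<Sum>l'=1..m. e l' j * (if mo l' j = Poly_Mapping.single i (2::nat) then 1 else 0)) = (if j = i then d i else 0)"
          proof (cases "j = i")
            case True
            then have "(\<Sum>l'=1..m. e l' j * (if mo l' j = Poly_Mapping.single i (2::nat) then 1 else 0)) = e i i"
              using i by (simp only: mo_eq1, simp)
            then show ?thesis using True by (simp add: e_def P_mat_def)
          qed (simp only: mo_eq1, simp)
        qed simp
        also have "\<dots> = d i" using i by simp
        finally have G1: "d i = 1" using W1 by simp
        have "Poly_Mapping.lookup W (mo l i) = (\<Sum>j=1..m. d j * (\<Sum>l'=1..m. e l' j * (if mo l' j = mo l i then 1 else 0)))"
          unfolding g d_def e_def by (rule coef[OF deg_mo])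
        also have "\<dots> = (\<Sum>j=1..m. (if j = i then d i * e l i else 0) + (if j = l then d l * e i l else 0))"
        proof (rule sum.cong)
          fix j assume j: "j \<in> {1..m}"
          have li': "l \<noteq> i" using li by simp
          show "d j * (\<Sum>l'=1..m. e l' j * (if mo l' j = mo l i then 1 else 0)) =
             (if j = i then d i * e l i else 0) + (if j = l then d l * e i l else 0)"
          proof (cases "j = i")
            case True
            then have "(\<Sum>l'=1..m. e l' j * (if mo l' j = mo l i then 1 else 0)) = e l i"
              using l li' by (simp only: mo_eq2[OF li'], simp)
            then show ?thesis using True li' by simp
          next
            case False
            show ?thesis
            proof (cases "j = l")
              case True
              then have "(\<Sum>l'=1..m. e l' j * (if mo l' j = mo l i then 1 else 0)) = e i l"
                using i li' by (simp only: mo_eq2[OF li'], simp)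
              then show ?thesis using True False by simp
            qed (use False in \<open>simp only: mo_eq2[OF li'], simp\<close>)
          qed
        qed simp
        also have "\<dots> = d i * e l i + d l * e i l" using i l by (simp add: sum.distrib)
        also have "\<dots> = d i" using li A1 by (simp add: e_def P_mat_def)
        finally show False using W2 G1 by simp
      qed
      show "Xv i ^ 2 \<in> char_ideal m A"
        using theta_sq[of i m A, OF i col] id_theta[of i m A, OF i] by simp
    qed
  qed
  finally show ?thesis using P1 unfolding m_def W_def c_def b_def by simp
qed

end
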